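(* Let $q\ge 2$ and $n\ge q+1$. If $\mathcal C\subseteq[q]^n$ is a code with insdel distance $d_I(\mathcal C)=2n-2$, then $|\mathcal C|\le q$.
   Context: $[q]=\{1,\dots,q\}$. For $\mathbf u,\mathbf v\in[q]^n$, the insdel distance $d_I(\mathbf u,\mathbf v)$ is the minimum number of insertions and deletions transforming $\mathbf u$ into $\mathbf v$; equivalently $d_I(\mathbf u,\mathbf v)=2n-2\ell_{\rm LCS}(\mathbf u,\mathbf v)$ where $\ell_{\rm LCS}$ is the length of a longest common subsequence. $d_I(\mathcal C)$ is the minimum insdel distance between distinct codewords. *)

theory Defs
  imports Main "HOL-Library.Sublist"
begin

definition lcs_len :: "'a list \<Rightarrow> 'a list \<Rightarrow> nat" where
  "lcs_len u v = Max {length w | w. subseq w u \<and> subseq w v}"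

definition insdel_dist :: "'a list \<Rightarrow> 'a list \<Rightarrow> nat" where
  "insdel_dist u v = length u + length v - 2 * lcs_len u v"

definition code_insdel_dist :: "'a list set \<Rightarrow> nat" where
  "code_insdel_dist C = Min {insdel_dist u v | u v. u \<in> C \<and> v \<in> C \<and> u \<noteq> v}"

definition words :: "nat \<Rightarrow> nat \<Rightarrow> nat list set" where
  "words q n = {u. length u = n \<and> set u \<subseteq> {1..q}}"

end

theory Submission
  imports Defs
begin

lemma words_finite: "finite (words q n)"
proof -
  have "words q n = {xs. set xs \<subseteq> {1..q} \<and> length xs = n}"
    unfolding words_def by auto
  thus ?thesis using finite_lists_length_eq[of "{1..q}" n] by simp
qed

lemma lcs_ge2:
  assumes "subseq [a,a] u" "subseq [a,a] v"
  shows "lcs_len u v \<ge> 2"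
proof -
  have fin: "finite {length w | w. subseq w u \<and> subseq w v}"
    by (rule finite_subset[of _ "{..length u}"]) (auto dest: list_emb_length)
  have "2 \<in> {length w | w. subseq w u \<and> subseq w v}"
    using assms by (auto intro!: exI[of _ "[a,a]"])
  thus ?thesis unfolding lcs_len_def by (rule Max_ge[OF fin])
qed

lemma rep_exists:
  assumes "u \<in> words q n" "n \<ge> q + 1"
  shows "\<exists>a. subseq [a,a] u"
proof -
  have "set u \<subseteq> {1..q}" "length u = n" using assms unfolding words_def by auto
  hence "card (set u) \<le> q" using card_mono[of "{1..q}" "set u"] by simp
  hence "\<not> distinct u" using \<open>length u = n\<close> assms(2) distinct_card[of u] by auto
  then obtain xs ys zs y where "u = xs @ [y] @ ys @ [y] @ zs"
    using not_distinct_decomp by blast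
  hence "subseq [y,y] u" by (simp add: subseq_append' list_emb_Cons2 list_emb_append2 )
  thus ?thesis by blast
qed

theorem lemma3p5:
  fixes q n :: nat and C :: "nat list set"
  assumes "q \<ge> 2" and "n \<ge> q + 1"
    and "C \<subseteq> words q n"
    and "code_insdel_dist C = 2 * n - 2"
  shows "card C \<le> q"
proof -
  define f where "f u = (SOME a. subseq [a,a] u)" for u :: "nat list"
  have fC: "subseq [f u, f u] u" if "u \<in> C" for u
    using rep_exists[of u q n] that assms unfolding f_def by (metis (mono_tags) someI_ex subsetD)
  have finC: "finite C" using assms(3) words_finite finite_subset by blast
  have inj: "inj_on f C"
  proof (rule inj_onI, rule ccontr)
    fix u v assume uv: "u \<in> C" "v \<in> C" "f u = f v" "u \<noteq> v"
    have lu: "length u = n" "length v = n" using uv assms(3) unfolding words_def by auto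
    have l2: "lcs_len u v \<ge> 2" using lcs_ge2 fC uv by metis
    have "code_insdel_dist C \<le> insdel_dist u v"
      unfolding code_insdel_dist_def
    proof (rule Min_le)
      have "{insdel_dist u v |u v. u \<in> C \<and> v \<in> C \<and> u \<noteq> v} \<subseteq> (\<lambda>(u,v). insdel_dist u v) ` (C \<times> C)"
        by auto
      thus "finite {insdel_dist u v |u v. u \<in> C \<and> v \<in> C \<and> u \<noteq> v}"
        using finC finite_subset by blast
    qed (use uv in auto)
    thus False using l2 lu assms unfolding insdel_dist_def by linarith
  qed
  have "f ` C \<subseteq> {1..q}"
  proof
    fix x assume "x \<in> f ` C"
    then obtain u where "u \<in> C" "x = f u" by auto
    hence "x \<in> set u" using fC[of u] by (metis list.set_intros(1) subseq_order.dual_order.trans subseq_singleton_left subseq_Cons')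
    show "x \<in> {1..q}" proof -
      have "set u \<subseteq> {1..q}" using \<open>u \<in> C\<close> assms(3) unfolding words_def by auto
      thus ?thesis using \<open>x \<in> set u\<close> by (rule subsetD)
    qed
  qed
  from card_inj_on_le[OF inj this] show ?thesis by simp
qed

end
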